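(* Let $m$ and $k$ be positive integers with $3\leq k\leq m/2$, and let $H$ be $\mathrm{Sym}(m)$ or $\mathrm{Alt}(m)$ acting on the set of $k$-element subsets of $\{1,\ldots,m\}$. If $H$ contains a permutation $g$ having at most four cycles in this action, then $m\leq 7$.
   Context: The number of cycles of a permutation is the number of orbits of the cyclic group it generates, fixed points included. Throughout this part of the paper it is assumed that $k\le m/2$. *)

theory Defs
  imports "HOL-Combinatorics.Combinatorics"
begin

definition Sym :: "nat \<Rightarrow> (nat \<Rightarrow> nat) set" where
  "Sym m = {g. g permutes {1..m}}"

definition Alt :: "nat \<Rightarrow> (nat \<Rightarrow> nat) set" where
  "Alt m = {g. g permutes {1..m} \<and> evenperm g}"

definition ksets :: "nat \<Rightarrow> nat \<Rightarrow> nat set set" where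
  "ksets m k = {A. A \<subseteq> {1..m} \<and> card A = k}"

text \<open>Orbit of a k-set A under the cyclic group generated by g (g has finite order,
  so non-negative powers suffice).\<close>
definition kset_orbit :: "(nat \<Rightarrow> nat) \<Rightarrow> nat set \<Rightarrow> nat set set" where
  "kset_orbit g A = {(g ^^ n) ` A | n. True}"

definition num_cycles_on_ksets :: "(nat \<Rightarrow> nat) \<Rightarrow> nat \<Rightarrow> nat \<Rightarrow> nat" where
  "num_cycles_on_ksets g m k = card (kset_orbit g ` ksets m k)"

end

theory Submission
  imports Defs
begin

lemma fiber_card:
  assumes "finite F" "\<And>Q. Q \<in> f ` F \<Longrightarrow> card {B\<in>F. f B = Q} \<le> p"
  shows "card F \<le> p * card (f ` F)"
proof -
  have e: "F = (\<Union>Q\<in>f`F. {B\<in>F. f B = Q})" by auto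
  have "card F \<le> (\<Sum>Q\<in>f`F. card {B\<in>F. f B = Q})"
    by (subst e) (rule card_UN_le, simp add: assms(1))
  also have "\<dots> \<le> (\<Sum>Q\<in>f`F. p)" by (rule sum_mono) (rule assms(2))
  finally show ?thesis by (simp add: mult.commute)
qed

lemma funpow_img_inv:
  assumes "g ` D = D" shows "(g^^n) ` D = D"
proof (induction n)
  case (Suc n)
  have "(g^^Suc n) ` D = g ` ((g^^n) ` D)" by (simp add: image_comp)
  then show ?case using Suc assms by simp
qed simp

lemma level_inv:
  assumes "g permutes U" "g ` D = D"
  shows "card ((g^^n) ` A \<inter> D) = card (A \<inter> D)"
proof -
  have inj: "inj (g^^n)" using permutes_funpow[OF assms(1)] permutes_inj by blast
  have "(g^^n) ` A \<inter> D = (g^^n) ` A \<inter> (g^^n) ` D" using funpow_img_inv[OF assms(2)] by simp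
  also have "\<dots> = (g^^n) ` (A \<inter> D)" using inj by (simp add: image_Int)
  finally show ?thesis using inj by (simp add: card_image inj_on_subset)
qed

lemma orbit_mem: "A \<in> kset_orbit g A"
  unfolding kset_orbit_def by (auto intro: exI[where x=0])

lemma finite_ksets: "finite (ksets m k)"
  unfolding ksets_def by (rule finite_subset[of _ "Pow {1..m}"]) auto

definition lev :: "(nat \<Rightarrow> nat) \<Rightarrow> nat \<Rightarrow> nat \<Rightarrow> nat set \<Rightarrow> nat \<Rightarrow> nat set set set" where
  "lev g m k D j = kset_orbit g ` {A \<in> ksets m k. card (A \<inter> D) = j}"

lemma levels_sum:
  assumes "g permutes {1..m}" "g ` D = D" "finite J"
  shows "(\<Sum>j\<in>J. card (lev g m k D j)) \<le> num_cycles_on_ksets g m k"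
proof -
  have fin: "finite (lev g m k D j)" for j
    unfolding lev_def by (rule finite_imageI, rule finite_subset[OF _ finite_ksets[of m k]]) auto
  have disj: "lev g m k D i \<inter> lev g m k D j = {}" if "i \<noteq> j" for i j
  proof (rule ccontr)
    assume "lev g m k D i \<inter> lev g m k D j \<noteq> {}"
    then obtain A A' where A: "card (A \<inter> D) = i" and A': "card (A' \<inter> D) = j"
      and eq: "kset_orbit g A' = kset_orbit g A"
      unfolding lev_def by auto
    have "A' \<in> kset_orbit g A" using orbit_mem[of A' g] eq by simp
    then obtain n where "A' = (g^^n) ` A" unfolding kset_orbit_def by auto
    then have "card (A' \<inter> D) = card (A \<inter> D)" using level_inv[OF assms(1,2)] by simp
    with A A' that show False by simp
  qed
  have "(\<Sum>j\<in>J. card (lev g m k D j)) = card (\<Union>j\<in>J. lev g m k D j)"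
    using disj fin assms(3) by (subst card_UN_disjoint) auto
  also have "\<dots> \<le> card (kset_orbit g ` ksets m k)"
    by (rule card_mono) (auto simp: finite_ksets lev_def)
  finally show ?thesis unfolding num_cycles_on_ksets_def .
qed

lemma binom_ge:
  assumes "a \<le> j" "j + a \<le> n"
  shows "n choose a \<le> n choose j"
proof (cases "2 * j \<le> n")
  case True then show ?thesis using assms binomial_mono by blast
next
  case False
  have "n choose a \<le> n choose (n - j)" using assms False by (intro binomial_mono) auto
  also have "\<dots> = n choose j" using assms by (intro binomial_symmetric[symmetric]) auto
  finally show ?thesis .
qed

lemma level_count:
  assumes g: "g permutes {1..m}" and D: "D \<subseteq> {1..m}" "g ` D = D"
    and p: "0 < p" "\<forall>y\<in>D. (g^^p) y = y"
    and j: "j \<le> card D" "j \<le> k" "k - j \<le> m - card D"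
  shows "card D choose j \<le> p * card (lev g m k D j)"
proof -
  have finD: "finite D" using D(1) finite_subset by blast
  have "card ({1..m} - D) = m - card D" using D(1) by (simp add: card_Diff_subset finD)
  then obtain Y where Y: "Y \<subseteq> {1..m} - D" "card Y = k - j" "finite Y"
    using obtain_subset_with_card_n[of "k - j" "{1..m} - D"] j(3) by metis
  define SS where "SS = {S. S \<subseteq> D \<and> card S = j}"
  define F where "F = (\<lambda>S. S \<union> Y) ` SS"
  have YD: "Y \<inter> D = {}" using Y by auto
  have capD: "(S \<union> Y) \<inter> D = S" if "S \<subseteq> D" for S using that YD by auto
  have injF: "inj_on (\<lambda>S. S \<union> Y) SS"
    by (rule inj_onI) (metis capD SS_def mem_Collect_eq)
  have cardF: "card F = card D choose j"
    unfolding F_def using injF by (simp add: card_image SS_def n_subsets finD)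
  have finF: "finite F" unfolding F_def SS_def
    by (rule finite_imageI, rule finite_subset[of _ "Pow D"]) (auto simp: finD)
  have Fsub: "F \<subseteq> {A \<in> ksets m k. card (A \<inter> D) = j}"
  proof
    fix B assume "B \<in> F"
    then obtain S where S: "S \<subseteq> D" "card S = j" "B = S \<union> Y" unfolding F_def SS_def by auto
    have finS: "finite S" using S(1) finD finite_subset by blast
    have "S \<inter> Y = {}" using S(1) YD by auto
    then have "card B = k" using S Y j(2) finS by (simp add: card_Un_disjoint)
    moreover have "B \<subseteq> {1..m}" using S D(1) Y by auto
    moreover have "card (B \<inter> D) = j" using capD[OF S(1)] S by simp
    ultimately show "B \<in> {A \<in> ksets m k. card (A \<inter> D) = j}" unfolding ksets_def by simp
  qed
  have fib: "card {B\<in>F. kset_orbit g B = Q} \<le> p" if Qin: "Q \<in> kset_orbit g ` F" for Q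
  proof -
    obtain S0 where S0: "S0 \<subseteq> D" "card S0 = j" "Q = kset_orbit g (S0 \<union> Y)"
    proof -
      from Qin obtain B where B: "B \<in> F" "Q = kset_orbit g B" by blast
      from B(1) obtain S where "S \<in> SS" "B = S \<union> Y" unfolding F_def by blast
      then show ?thesis using B(2) that unfolding SS_def by blast
    qed
    have "{B\<in>F. kset_orbit g B = Q} \<subseteq> (\<lambda>i. (g^^i) ` S0 \<union> Y) ` {..<p}"
    proof
      fix B assume "B \<in> {B\<in>F. kset_orbit g B = Q}"
      then obtain S where S: "S \<subseteq> D" "B = S \<union> Y" "kset_orbit g B = Q"
        unfolding F_def SS_def by auto
      have "B \<in> kset_orbit g (S0 \<union> Y)" using orbit_mem[of B g] S(3) S0(3) by simp
      then obtain n where n: "S \<union> Y = (g^^n) ` (S0 \<union> Y)" using S(2) unfolding kset_orbit_def by auto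
      have inj: "inj (g^^n)" using permutes_funpow[OF g] permutes_inj by blast
      have Dn: "(g^^n) ` D = D" using funpow_img_inv[OF D(2)] .
      have "(g^^n) ` Y \<inter> D = (g^^n) ` Y \<inter> (g^^n) ` D" using Dn by simp
      also have "\<dots> = (g^^n) ` (Y \<inter> D)" using inj by (simp add: image_Int)
      finally have e1: "(g^^n) ` Y \<inter> D = {}" using YD by simp
      have e2: "(g^^n) ` S0 \<subseteq> D" using S0(1) Dn by blast
      have "S = (S \<union> Y) \<inter> D" using capD[OF S(1)] by simp
      also have "\<dots> = ((g^^n) ` S0 \<inter> D) \<union> ((g^^n) ` Y \<inter> D)" using n by auto
      also have "\<dots> = (g^^n) ` S0" using e1 e2 by auto
      also have "\<dots> = (g^^(n mod p)) ` S0"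
        using S0(1) p(2) by (intro image_cong) (auto simp: funpow_mod_eq)
      finally have "B = (g^^(n mod p)) ` S0 \<union> Y" using S(2) by simp
      moreover have "n mod p < p" using p(1) by simp
      ultimately show "B \<in> (\<lambda>i. (g^^i) ` S0 \<union> Y) ` {..<p}" by blast
    qed
    then have "card {B\<in>F. kset_orbit g B = Q} \<le> card ((\<lambda>i. (g^^i) ` S0 \<union> Y) ` {..<p})"
      by (rule card_mono[rotated]) simp
    also have "\<dots> \<le> p" using card_image_le[of "{..<p}"] by simp
    finally show ?thesis .
  qed
  have "card D choose j \<le> p * card (kset_orbit g ` F)"
    using fiber_card[OF finF fib] cardF by simp
  also have "\<dots> \<le> p * card (lev g m k D j)"
    unfolding lev_def
    by (intro mult_le_mono2 card_mono finite_imageI image_mono Fsub)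
       (rule finite_subset[OF _ finite_ksets[of m k]], auto)
  finally show ?thesis .
qed

lemma choose2_gt:
  assumes "4 \<le> (l::nat)" "l * c \<ge> l choose 2" shows "c \<ge> 2"
proof (rule ccontr)
  assume "\<not> c \<ge> 2"
  then have "l * c \<le> l" by (cases c) auto
  moreover have "l < l choose 2"
  proof -
    have A: "l * 3 \<le> l * (l - 1)" using assms(1) by (intro mult_le_mono2) auto
    have "l * 3 div 2 \<le> l * (l - 1) div 2" by (rule div_le_mono[OF A])
    moreover have "l < l * 3 div 2" using assms(1) by presburger
    ultimately show ?thesis by (simp only: choose_two)
  qed
  ultimately show False using assms(2) by linarith
qed

lemma choose2_gt3:
  assumes "6 \<le> (l::nat)" "l * c \<ge> l choose 2" shows "c \<ge> 3"
proof (rule ccontr)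
  assume "\<not> c \<ge> 3"
  then have "c \<le> 2" by simp
  then have "l * c \<le> l * 2" by (intro mult_le_mono2)
  moreover have "l * 2 < l choose 2"
  proof -
    have A: "l * 5 \<le> l * (l - 1)" using assms(1) by (intro mult_le_mono2) auto
    have "l * 5 div 2 \<le> l * (l - 1) div 2" by (rule div_le_mono[OF A])
    moreover have "l * 2 < l * 5 div 2" using assms(1) by presburger
    ultimately show ?thesis by (simp only: choose_two)
  qed
  ultimately show False using assms(2) by linarith
qed

lemma choose3_gt:
  assumes "8 \<le> (l::nat)" "l * c \<ge> l choose 3" shows "c \<ge> 5"
proof -
  have "3 * (l choose 3) = l * (l - 1 choose 2)" using times_binomial_minus1_eq[of 3 l] by simp
  moreover have "(7::nat) choose 2 \<le> l - 1 choose 2" using assms(1) by (intro binomial_right_mono) simp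
  moreover have "(7::nat) choose 2 = 21" by (simp add: numeral_eq_Suc)
  ultimately have "l * 21 \<le> l * (3 * c)" using assms(2)
    by (metis (no_types, lifting) mult.left_commute mult_le_mono2 order_trans)
  then have "21 \<le> 3 * c" using assms(1) by simp
  then show ?thesis by simp
qed

theorem lemma3p2:
  fixes m k :: nat and H :: "(nat \<Rightarrow> nat) set" and g :: "nat \<Rightarrow> nat"
  assumes "0 < m" "0 < k" "3 \<le> k" "2 * k \<le> m"
    and "H = Sym m \<or> H = Alt m"
    and "g \<in> H"
    and "num_cycles_on_ksets g m k \<le> 4"
  shows "m \<le> 7"
proof (rule ccontr)
  assume "\<not> m \<le> 7"
  then have m8: "8 \<le> m" by simp
  have g: "g permutes {1..m}" using assms(5,6) unfolding Sym_def Alt_def by auto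
  have gU: "g ` {1..m} = {1..m}" using g permutes_image by blast
  let ?N = "num_cycles_on_ksets g m k"
  show False
  proof (cases "\<exists>x\<in>{1..m}. g x \<noteq> x \<and> (g^^2) x \<noteq> x \<and> (g^^3) x \<noteq> x")
    case False
    have p6: "\<forall>y\<in>{1..m}. (g^^6) y = y"
    proof
      fix y assume "y \<in> {1..m}"
      then have "(g^^1) y = y \<or> (g^^2) y = y \<or> (g^^3) y = y" using False by auto
      then show "(g^^6) y = y"
      proof (elim disjE)
        assume h: "(g^^1) y = y" show ?thesis using funpow_mod_eq[OF h, of 6] h by simp
      next
        assume h: "(g^^2) y = y" show ?thesis using funpow_mod_eq[OF h, of 6] by simp
      next
        assume h: "(g^^3) y = y" show ?thesis using funpow_mod_eq[OF h, of 6] by simp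
      qed
    qed
    have "card {1..m} choose k \<le> 6 * card (lev g m k {1..m} k)"
      using assms(4) by (intro level_count[OF g _ gU _ p6]) auto
    moreover have "(\<Sum>j\<in>{k}. card (lev g m k {1..m} j)) \<le> ?N" by (rule levels_sum[OF g gU]) simp
    moreover have "(8::nat) choose 3 \<le> m choose 3" using m8 by (rule binomial_right_mono)
    moreover have "m choose 3 \<le> m choose k" using assms(3,4) m8 by (intro binom_ge) auto
    moreover have "(8::nat) choose 3 = 56" by (simp add: numeral_eq_Suc)
    ultimately show False using assms(7) by simp
  next
    case True
    then obtain x where x: "x \<in> {1..m}" "g x \<noteq> x" "(g^^2) x \<noteq> x" "(g^^3) x \<noteq> x" by blast
    have perm: "permutation g" using g permutation_permutes by blast
    have xo: "x \<in> orbit g x" using permutation_self_in_orbit[OF perm] .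
    define l where "l = funpow_dist1 g x x"
    define D where "D = orbit g x"
    have gl: "(g^^l) x = x" unfolding l_def using funpow_dist1_prop[OF xo] .
    have Deq: "D = (\<lambda>n. (g^^n) x) ` {0..<l}" unfolding D_def l_def using orbit_conv_funpow_dist1[OF xo] .
    have cardD: "card D = l" unfolding Deq l_def using inj_on_funpow_dist1[OF xo] by (simp add: card_image)
    have l4: "4 \<le> l"
    proof (rule ccontr)
      assume "\<not> 4 \<le> l"
      moreover have "0 < l" unfolding l_def by simp
      ultimately have "l = 1 \<or> l = 2 \<or> l = 3" by auto
      then show False using gl x by auto
    qed
    have DU: "D \<subseteq> {1..m}"
    proof
      fix y assume "y \<in> D"
      then obtain n where "y = (g^^n) x" unfolding Deq by auto
      then show "y \<in> {1..m}" using permutes_in_image[OF permutes_funpow[OF g, of n]] x(1) by simp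
    qed
    have finD: "finite D" using DU finite_subset by blast
    have gD: "g ` D = D"
    proof (rule endo_inj_surj[OF finD])
      show "g ` D \<subseteq> D"
      proof (rule image_subsetI)
        fix y assume "y \<in> D" then show "g y \<in> D" unfolding D_def by (rule orbit.intros(2))
      qed
      show "inj_on g D" using permutes_inj[OF g] by (metis inj_on_subset subset_UNIV)
    qed
    have pD: "\<forall>y\<in>D. (g^^l) y = y"
    proof
      fix y assume "y \<in> D"
      then obtain n where y: "y = (g^^n) x" unfolding Deq by auto
      have "(g^^l) y = (g^^(l + n)) x" unfolding y by (simp only: funpow_add o_apply)
      also have "\<dots> = (g^^(n + l)) x" by (simp only: add.commute)
      also have "\<dots> = (g^^n) ((g^^l) x)" by (simp only: funpow_add o_apply)
      finally show "(g^^l) y = y" using gl y by simp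
    qed
    have lm: "l \<le> m" using card_mono[OF _ DU] cardD by simp
    define c where "c j = card (lev g m k D j)" for j
    have H: "l choose j \<le> l * c j" if "j \<le> l" "j \<le> k" "k - j \<le> m - l" for j
      using level_count[OF g DU gD _ pD] that l4 cardD unfolding c_def by simp
    have S: "(\<Sum>j\<in>J. c j) \<le> 4" if "finite J" for J
      using levels_sum[OF g gD that, of k] assms(7) unfolding c_def by simp
    have c1: "1 \<le> c j" if "j \<le> l" "j \<le> k" "k - j \<le> m - l" for j
      using H[OF that] that by (cases "c j") auto
    have c2: "2 \<le> c j" if "j \<le> l" "j \<le> k" "k - j \<le> m - l" "2 \<le> j" "j + 2 \<le> l" for j
      using H[OF that(1-3)] binom_ge[of 2 j l] that by (intro choose2_gt[OF l4]) auto
    show False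
    proof (cases "4 \<le> m - l")
      case r4: True
      show False
      proof (cases "k = 3")
        case True
        have "(\<Sum>j\<in>{0,1,2,3}. c j) \<le> 4" by (rule S) simp
        moreover have "1 \<le> c 0" "1 \<le> c 1" "2 \<le> c 2" "1 \<le> c 3"
          using c1 c2 True r4 l4 by auto
        ultimately show False by simp
      next
        case False
        define a where "a = k - min k (m - l)"
        have "(\<Sum>j\<in>{a..a+4}. 1) \<le> (\<Sum>j\<in>{a..a+4}. c j)"
          by (rule sum_mono, rule c1) (use False assms(3,4) r4 lm l4 m8 in \<open>auto simp: a_def\<close>)
        moreover have "(\<Sum>j\<in>{a..a+4}. c j) \<le> 4" by (rule S) simp
        ultimately show False by simp
      qed
    next
      case False
      then have "m - l = 0 \<or> m - l = 1 \<or> m - l = 2 \<or> m - l = 3" by auto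
      then show False
      proof (elim disjE)
        assume r: "m - l = 0"
        have "l choose 3 \<le> l choose k" using assms(3,4) r lm m8 by (intro binom_ge) auto
        then have "5 \<le> c k" using H[of k] r lm assms(4) m8 by (intro choose3_gt[of l]) auto
        moreover have "(\<Sum>j\<in>{k}. c j) \<le> 4" by (rule S) simp
        ultimately show False by simp
      next
        assume r: "m - l = 1"
        have "3 \<le> c j" if "j = k - 1 \<or> j = k" for j
        proof -
          have v: "j \<le> l" "j \<le> k" "k - j \<le> m - l" "2 \<le> j" "j + 2 \<le> l"
            using that r lm assms(3,4) m8 by auto
          have "l choose 2 \<le> l choose j" using binom_ge[of 2 j l] v by simp
          also have "\<dots> \<le> l * c j" using H[OF v(1-3)] .
          finally show ?thesis using r lm m8 by (intro choose2_gt3[of l]) auto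
        qed
        moreover have "(\<Sum>j\<in>{k-1,k}. c j) \<le> 4" by (rule S) simp
        ultimately have "3 \<le> c (k-1)" "3 \<le> c k" "c (k-1) + c k \<le> 4" using assms(3) by auto
        then show False by linarith
      next
        assume r: "m - l = 2"
        have "2 \<le> c (k-1)" "2 \<le> c k" "1 \<le> c (k-2)"
          using c1 c2 r lm assms(3,4) m8 by auto
        moreover have "(\<Sum>j\<in>{k-2,k-1,k}. c j) \<le> 4" by (rule S) simp
        moreover have "(\<Sum>j\<in>{k-2,k-1,k}. c j) = c (k-2) + c (k-1) + c k"
        proof -
          obtain q where q: "k = q + 3" using assms(3) le_iff_add[of 3 k] by (auto simp: add.commute)
          show ?thesis unfolding q by (simp add: numeral_eq_Suc)
        qed
        ultimately show False by linarith
      next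
        assume r: "m - l = 3"
        have "2 \<le> c (k-1)" "1 \<le> c k" "1 \<le> c (k-2)" "1 \<le> c (k-3)"
          using c1 c2 r lm assms(3,4) m8 by auto
        moreover have "(\<Sum>j\<in>{k-3,k-2,k-1,k}. c j) \<le> 4" by (rule S) simp
        moreover have "(\<Sum>j\<in>{k-3,k-2,k-1,k}. c j) = c (k-3) + c (k-2) + c (k-1) + c k"
        proof -
          obtain q where q: "k = q + 3" using assms(3) le_iff_add[of 3 k] by (auto simp: add.commute)
          show ?thesis unfolding q by (simp add: numeral_eq_Suc)
        qed
        ultimately show False by linarith
      qed
    qed
  qed
qed

end
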